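(* Let $m>2n$ be positive integers. Every free independent set of the Kneser graph $KG(m,n)$ has size at most $\binom{m-1}{n-1}-\binom{m-n-1}{n-1}$. Moreover, for all integers $a\ge 0$ and $b\ge 1$, $$\phi^a_b(KG(m,n))\ge \frac{\binom{m}{n}-a\binom{m-1}{n-1}}{\binom{m-1}{n-1}-\binom{m-n-1}{n-1}}.$$
   Context: $KG(m,n)$ has as vertices the $n$-subsets of $\{1,\dots,m\}$, two being adjacent iff disjoint. An independent set $F$ of a graph is free if it is contained in at least two distinct maximal independent sets; an edge $uv$ supports $F$ if $F\cap(N(u)\cup N(v))=\emptyset$. For integers $a\ge0,b\ge1$, $\phi^a_b(G)$ is the minimum $t$ such that $V(G)$ is partitioned into independent sets $V_1,\dots,V_t$ with $V_1,\dots,V_{t-a}$ free, and there are edges $e_1,\dots,e_{t-a}$ (not necessarily distinct) with $e_i$ supporting $V_i$ and every vertex incident with at most $b$ of them; $\phi^a_b(G)=\infty$ if no such $t$ exists. *)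

theory Defs
  imports Complex_Main "HOL-Library.Extended_Nat"
begin

text \<open>Graphs are given by a vertex set V and a symmetric adjacency predicate E.\<close>

definition kneser_vertices :: "nat \<Rightarrow> nat \<Rightarrow> nat set set" where
  "kneser_vertices m n = {A. A \<subseteq> {1..m} \<and> card A = n}"

definition kneser_adj :: "nat set \<Rightarrow> nat set \<Rightarrow> bool" where
  "kneser_adj A B \<longleftrightarrow> A \<inter> B = {}"

definition independent :: "'a set \<Rightarrow> ('a \<Rightarrow> 'a \<Rightarrow> bool) \<Rightarrow> 'a set \<Rightarrow> bool" where
  "independent V E S \<longleftrightarrow> S \<subseteq> V \<and> (\<forall>u\<in>S. \<forall>v\<in>S. \<not> E u v)"

definition maximal_independent :: "'a set \<Rightarrow> ('a \<Rightarrow> 'a \<Rightarrow> bool) \<Rightarrow> 'a set \<Rightarrow> bool" where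
  "maximal_independent V E S \<longleftrightarrow> independent V E S \<and>
     (\<forall>T. independent V E T \<and> S \<subseteq> T \<longrightarrow> T = S)"

definition free_independent :: "'a set \<Rightarrow> ('a \<Rightarrow> 'a \<Rightarrow> bool) \<Rightarrow> 'a set \<Rightarrow> bool" where
  "free_independent V E F \<longleftrightarrow> independent V E F \<and>
     (\<exists>M1 M2. M1 \<noteq> M2 \<and> maximal_independent V E M1 \<and> maximal_independent V E M2
        \<and> F \<subseteq> M1 \<and> F \<subseteq> M2)"

definition nbhd :: "'a set \<Rightarrow> ('a \<Rightarrow> 'a \<Rightarrow> bool) \<Rightarrow> 'a \<Rightarrow> 'a set" where
  "nbhd V E u = {w\<in>V. E u w}"

definition supports :: "'a set \<Rightarrow> ('a \<Rightarrow> 'a \<Rightarrow> bool) \<Rightarrow> 'a \<times> 'a \<Rightarrow> 'a set \<Rightarrow> bool" where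
  "supports V E e F \<longleftrightarrow> fst e \<in> V \<and> snd e \<in> V \<and> E (fst e) (snd e) \<and>
     F \<inter> (nbhd V E (fst e) \<union> nbhd V E (snd e)) = {}"

text \<open>Feasibility of t in the definition of phi^a_b: a partition V_1..V_t into nonempty
  independent sets, V_1..V_{t-a} free (none if t \<le> a), edges e_1..e_{t-a}
  with e_i supporting V_i, each vertex incident with at most b of them (counted with multiplicity).\<close>
definition phi_feasible :: "'a set \<Rightarrow> ('a \<Rightarrow> 'a \<Rightarrow> bool) \<Rightarrow> nat \<Rightarrow> nat \<Rightarrow> nat \<Rightarrow> bool" where
  "phi_feasible V E a b t \<longleftrightarrow>
     (\<exists>P :: nat \<Rightarrow> 'a set. \<exists>e :: nat \<Rightarrow> 'a \<times> 'a.
        (\<Union>i\<in>{1..t}. P i) = V \<and>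
        (\<forall>i\<in>{1..t}. \<forall>j\<in>{1..t}. i \<noteq> j \<longrightarrow> P i \<inter> P j = {}) \<and>
        (\<forall>i\<in>{1..t}. P i \<noteq> {} \<and> independent V E (P i)) \<and>
        (\<forall>i\<in>{1..t - a}. free_independent V E (P i) \<and> supports V E (e i) (P i)) \<and>
        (\<forall>x\<in>V. card {i\<in>{1..t - a}. x = fst (e i) \<or> x = snd (e i)} \<le> b))"

definition phi :: "'a set \<Rightarrow> ('a \<Rightarrow> 'a \<Rightarrow> bool) \<Rightarrow> nat \<Rightarrow> nat \<Rightarrow> enat" where
  "phi V E a b = Inf {enat t | t. phi_feasible V E a b t}"

end

theory Submission
  imports Defs
begin


definition ksub :: "nat set \<Rightarrow> nat \<Rightarrow> nat set set" where
  "ksub Y k = {S. S \<subseteq> Y \<and> card S = k}"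

definition cross :: "nat set set \<Rightarrow> nat set set \<Rightarrow> bool" where
  "cross A B \<longleftrightarrow> (\<forall>a\<in>A. \<forall>b\<in>B. a \<inter> b \<noteq> {})"

definition sh :: "nat \<Rightarrow> nat \<Rightarrow> nat set \<Rightarrow> nat set" where
  "sh y z G = (if z \<in> G \<and> y \<notin> G then insert y (G - {z}) else G)"

definition shF :: "nat \<Rightarrow> nat \<Rightarrow> nat set set \<Rightarrow> nat set set" where
  "shF y z F = {G\<in>F. sh y z G \<in> F} \<union> (sh y z) ` {G\<in>F. sh y z G \<notin> F}"

definition stable :: "nat \<Rightarrow> nat \<Rightarrow> nat set set \<Rightarrow> bool" where
  "stable y z F \<longleftrightarrow> (\<forall>G\<in>F. z \<in> G \<longrightarrow> y \<notin> G \<longrightarrow> insert y (G - {z}) \<in> F)"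

lemma card_ksub: "finite Y \<Longrightarrow> card (ksub Y k) = card Y choose k"
  unfolding ksub_def by (rule n_subsets)

lemma finite_ksub: "finite Y \<Longrightarrow> finite (ksub Y k)"
  unfolding ksub_def by (auto intro: finite_subset[of _ "Pow Y"])

lemma sh_fixed: "sh y z G = G \<or> (z \<in> G \<and> y \<notin> G \<and> sh y z G = insert y (G - {z}))"
  unfolding sh_def by auto

lemma sh_idem: "y \<noteq> z \<Longrightarrow> sh y z (sh y z G) = sh y z G"
  unfolding sh_def by auto

lemma sh_inj: "y \<noteq> z \<Longrightarrow> inj_on (sh y z) {G. z \<in> G \<and> y \<notin> G}"
proof (rule inj_onI)
  fix a b assume "y \<noteq> z" "a \<in> {G. z \<in> G \<and> y \<notin> G}" "b \<in> {G. z \<in> G \<and> y \<notin> G}" "sh y z a = sh y z b"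
  then have "insert y (a - {z}) = insert y (b - {z})" "z \<in> a" "z \<in> b" "y \<notin> a" "y \<notin> b"
    unfolding sh_def by auto
  then have "a - {z} = b - {z}" using insert_ident[of y "a - {z}" "b - {z}"] by auto
  then show "a = b" using \<open>z \<in> a\<close> \<open>z \<in> b\<close> by (metis insert_Diff)
qed

lemma shF_mem_sh: "y \<noteq> z \<Longrightarrow> H \<in> F \<Longrightarrow> sh y z H \<in> shF y z F"
  unfolding shF_def using sh_idem[of y z H] by (cases "sh y z H \<in> F") auto

lemma shF_mem_fixed: "G \<in> F \<Longrightarrow> sh y z G = G \<Longrightarrow> G \<in> shF y z F"
  unfolding shF_def by auto

lemma shF_cases:
  assumes "G \<in> shF y z F"
  obtains "G \<in> F" "sh y z G \<in> F"
  | H where "H \<in> F" "sh y z H \<notin> F" "G = sh y z H" "z \<in> H" "y \<notin> H" "G = insert y (H - {z})"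
  using assms unfolding shF_def sh_def by (auto split: if_splits)

lemma card_shF:
  assumes "finite F" "y \<noteq> z"
  shows "card (shF y z F) = card F"
proof -
  let ?P = "{G\<in>F. sh y z G \<in> F}" and ?Q = "{G\<in>F. sh y z G \<notin> F}"
  have inj: "inj_on (sh y z) ?Q"
  proof (rule inj_on_subset[OF sh_inj[OF assms(2)]])
    show "?Q \<subseteq> {G. z \<in> G \<and> y \<notin> G}" unfolding sh_def by (auto split: if_splits)
  qed
  have disj: "?P \<inter> (sh y z) ` ?Q = {}" by auto
  have "card (shF y z F) = card ?P + card ((sh y z) ` ?Q)"
    unfolding shF_def using assms(1) disj by (intro card_Un_disjoint) auto
  also have "\<dots> = card ?P + card ?Q" using card_image[OF inj] by simp
  also have "\<dots> = card F" using assms(1) 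
    by (subst card_Un_disjoint[symmetric]) (auto intro: arg_cong[where f=card])
  finally show ?thesis .
qed

lemma finite_shF: "finite F \<Longrightarrow> finite (shF y z F)"
  unfolding shF_def by auto

lemma shF_ksub:
  assumes "F \<subseteq> ksub Y k" "y \<in> Y" "finite Y"
  shows "shF y z F \<subseteq> ksub Y k"
proof
  fix G assume "G \<in> shF y z F"
  then show "G \<in> ksub Y k"
  proof (cases rule: shF_cases)
    case 1 then show ?thesis using assms by auto
  next
    case (2 H)
    then have "H \<in> ksub Y k" using assms by auto
    then have "finite H" "H \<subseteq> Y" "card H = k" unfolding ksub_def 
      using assms(2,3) by (auto intro: finite_subset)
    have "card (insert y (H - {z})) = card H" using \<open>finite H\<close> 2(4,5)
    proof -
      have "card H > 0" using \<open>finite H\<close> 2(4) card_gt_0_iff by blast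
      then show ?thesis using \<open>finite H\<close> 2(4,5) by (simp add: card_insert_if card_Diff_singleton)
    qed
    then show ?thesis unfolding ksub_def using 2(6) \<open>H \<subseteq> Y\<close> \<open>card H = k\<close> assms(2)
      by auto
  qed
qed

lemma shF_cross:
  assumes "cross A B" "y \<noteq> z"
  shows "cross (shF y z A) (shF y z B)"
  unfolding cross_def
proof (intro ballI)
  fix a b assume a: "a \<in> shF y z A" and b: "b \<in> shF y z B"
  from a show "a \<inter> b \<noteq> {}"
  proof (cases rule: shF_cases)
    case 1 note a1 = this
    from b show ?thesis
    proof (cases rule: shF_cases)
      case 1 then show ?thesis using a1 assms unfolding cross_def by auto
    next
      case (2 H)
      show ?thesis
      proof (cases "y \<in> a")
        case True then show ?thesis using 2 by auto
      next
        case False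
        show ?thesis
        proof (cases "z \<in> a")
          case False
          have "a \<inter> H \<noteq> {}" using a1 2 assms unfolding cross_def by auto
          then show ?thesis using 2 False by auto
        next
          case True
          have "sh y z a \<inter> H \<noteq> {}" using a1 2 assms unfolding cross_def by auto
          then show ?thesis using 2 True \<open>y \<notin> a\<close> unfolding sh_def by auto
        qed
      qed
    qed
  next
    case (2 H) note a2 = this
    from b show ?thesis
    proof (cases rule: shF_cases)
      case 1 note b1 = this
      show ?thesis
      proof (cases "y \<in> b")
        case True then show ?thesis using a2 by auto
      next
        case False
        show ?thesis
        proof (cases "z \<in> b")
          case False
          have "H \<inter> b \<noteq> {}" using b1 a2 assms unfolding cross_def by auto
          then show ?thesis using a2 False by auto
        next
          case True
          have "H \<inter> sh y z b \<noteq> {}" using b1 a2 assms unfolding cross_def by auto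
          then show ?thesis using a2 True \<open>y \<notin> b\<close> unfolding sh_def by auto
        qed
      qed
    next
      case (2 H') then show ?thesis using a2 by auto
    qed
  qed
qed



lemma shF_zsets_sub:
  assumes "y \<noteq> z"
  shows "{G\<in>shF y z F. z \<in> G} \<subseteq> {G\<in>F. z \<in> G \<and> sh y z G \<in> F}"
proof
  fix G assume "G \<in> {G\<in>shF y z F. z \<in> G}"
  then have G: "G \<in> shF y z F" "z \<in> G" by auto
  from G(1) show "G \<in> {G\<in>F. z \<in> G \<and> sh y z G \<in> F}"
  proof (cases rule: shF_cases)
    case 1 then show ?thesis using G by auto
  next
    case (2 H) then show ?thesis using G assms by auto
  qed
qed

lemma shF_measure:
  assumes "finite F" "y \<noteq> z"
  shows "card {G\<in>shF y z F. z \<in> G} \<le> card {G\<in>F. z \<in> G}"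
    and "\<not> stable y z F \<Longrightarrow> card {G\<in>shF y z F. z \<in> G} < card {G\<in>F. z \<in> G}"
proof -
  have fin: "finite {G\<in>F. z \<in> G}" using assms by auto
  have sub: "{G\<in>shF y z F. z \<in> G} \<subseteq> {G\<in>F. z \<in> G}" using shF_zsets_sub[OF assms(2)] by auto
  show "card {G\<in>shF y z F. z \<in> G} \<le> card {G\<in>F. z \<in> G}" by (rule card_mono[OF fin sub])
  assume "\<not> stable y z F"
  then obtain G where G: "G \<in> F" "z \<in> G" "y \<notin> G" "insert y (G - {z}) \<notin> F"
    unfolding stable_def by auto
  then have "sh y z G \<notin> F" unfolding sh_def by auto
  then have "G \<notin> {G\<in>shF y z F. z \<in> G}" using shF_zsets_sub[OF assms(2)] by auto
  then have "{G\<in>shF y z F. z \<in> G} \<subset> {G\<in>F. z \<in> G}" using sub G by auto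
  then show "card {G\<in>shF y z F. z \<in> G} < card {G\<in>F. z \<in> G}" by (rule psubset_card_mono[OF fin])
qed

lemma stabilize:
  assumes "finite A0" "finite B0" "Inv A0 B0"
    and pres: "\<And>A B y. y \<in> Y' \<Longrightarrow> Inv A B \<Longrightarrow> Inv (shF y z A) (shF y z B)"
    and nz: "z \<notin> Y'"
  shows "\<exists>A B. Inv A B \<and> finite A \<and> finite B \<and> card A = card A0 \<and> card B = card B0 \<and>
           (\<forall>y\<in>Y'. stable y z A \<and> stable y z B)"
proof -
  define mu where "mu A B = card {G\<in>A. z \<in> G} + card {G\<in>B. z \<in> G}" for A B
  have "\<forall>A B. mu A B = n \<longrightarrow> Inv A B \<longrightarrow> finite A \<longrightarrow> finite B \<longrightarrow>
     (\<exists>A' B'. Inv A' B' \<and> finite A' \<and> finite B' \<and> card A' = card A \<and> card B' = card B \<and>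
           (\<forall>y\<in>Y'. stable y z A' \<and> stable y z B'))" for n
  proof (induction n rule: less_induct)
    case (less n)
    show ?case
    proof (intro allI impI)
      fix A B assume h: "mu A B = n" "Inv A B" "finite A" "finite B"
      show "\<exists>A' B'. Inv A' B' \<and> finite A' \<and> finite B' \<and> card A' = card A \<and> card B' = card B \<and>
           (\<forall>y\<in>Y'. stable y z A' \<and> stable y z B')"
      proof (cases "\<forall>y\<in>Y'. stable y z A \<and> stable y z B")
        case True then show ?thesis using h by blast
      next
        case False
        then obtain y where y: "y \<in> Y'" "\<not> (stable y z A \<and> stable y z B)" by auto
        have yz: "y \<noteq> z" using y nz by auto
        let ?A = "shF y z A" and ?B = "shF y z B"
        have lt: "mu ?A ?B < n"
        proof -
          have "card {G\<in>?A. z \<in> G} \<le> card {G\<in>A. z \<in> G}" "card {G\<in>?B. z \<in> G} \<le> card {G\<in>B. z \<in> G}"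
            using shF_measure(1)[OF h(3) yz] shF_measure(1)[OF h(4) yz] by auto
          moreover have "card {G\<in>?A. z \<in> G} < card {G\<in>A. z \<in> G} \<or> card {G\<in>?B. z \<in> G} < card {G\<in>B. z \<in> G}"
            using shF_measure(2)[OF h(3) yz] shF_measure(2)[OF h(4) yz] y(2) by auto
          ultimately show ?thesis using h(1) unfolding mu_def by linarith
        qed
        have "Inv ?A ?B" using pres[OF y(1) h(2)] .
        moreover have "finite ?A" "finite ?B" using h finite_shF by auto
        ultimately obtain A' B' where "Inv A' B'" "finite A'" "finite B'" "card A' = card ?A" "card B' = card ?B"
           "\<forall>y\<in>Y'. stable y z A' \<and> stable y z B'"
          using less.IH[OF lt] by blast
        moreover have "card ?A = card A" "card ?B = card B" using card_shF h yz by auto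
        ultimately show ?thesis by metis
      qed
    qed
  qed
  then show ?thesis using assms by blast
qed



definition F0 :: "nat \<Rightarrow> nat set set \<Rightarrow> nat set set" where
  "F0 z F = {G\<in>F. z \<notin> G}"
definition F1 :: "nat \<Rightarrow> nat set set \<Rightarrow> nat set set" where
  "F1 z F = (\<lambda>G. G - {z}) ` {G\<in>F. z \<in> G}"

lemma card_F01: assumes "finite F" shows "card F = card (F0 z F) + card (F1 z F)"
proof -
  have inj: "inj_on (\<lambda>G. G - {z}) {G\<in>F. z \<in> G}"
  proof (rule inj_onI)
    fix a b assume "a \<in> {G\<in>F. z \<in> G}" "b \<in> {G\<in>F. z \<in> G}" "a - {z} = b - {z}"
    then have "insert z (a - {z}) = insert z (b - {z})" "z \<in> a" "z \<in> b" by auto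
    then show "a = b" by (simp add: insert_absorb)
  qed
  have "card F = card (F0 z F) + card {G\<in>F. z \<in> G}"
    unfolding F0_def using assms by (subst card_Un_disjoint[symmetric]) (auto intro: arg_cong[where f=card])
  then show ?thesis unfolding F1_def using card_image[OF inj] by simp
qed

lemma F0_ksub: "F \<subseteq> ksub Y k \<Longrightarrow> F0 z F \<subseteq> ksub (Y - {z}) k"
  unfolding F0_def ksub_def by auto

lemma F1_ksub: assumes "F \<subseteq> ksub Y k" "finite Y" shows "F1 z F \<subseteq> ksub (Y - {z}) (k - 1)"
proof
  fix S assume "S \<in> F1 z F"
  then obtain G where G: "G \<in> F" "z \<in> G" "S = G - {z}" unfolding F1_def by auto
  then have "G \<subseteq> Y" "card G = k" using assms unfolding ksub_def by auto
  moreover have "finite G" using \<open>G \<subseteq> Y\<close> assms(2) by (rule finite_subset)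
  ultimately show "S \<in> ksub (Y - {z}) (k - 1)" unfolding ksub_def using G by auto
qed

lemma F1_mem: "G \<in> F \<Longrightarrow> z \<in> G \<Longrightarrow> G - {z} \<in> F1 z F"
  unfolding F1_def by auto

lemma F1_memE: "S \<in> F1 z F \<Longrightarrow> (\<And>G. G \<in> F \<Longrightarrow> z \<in> G \<Longrightarrow> S = G - {z} \<Longrightarrow> z \<notin> S \<Longrightarrow> P) \<Longrightarrow> P"
  unfolding F1_def by auto

lemma ksub_empty0: assumes "finite Y" shows "ksub Y 0 = {{}}"
proof -
  have "S = {}" if "S \<subseteq> Y" "card S = 0" for S
    using that finite_subset[OF that(1)] assms by auto
  then show ?thesis unfolding ksub_def by auto
qed

lemma card_meet:
  assumes "finite Y" "B \<subseteq> Y"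
  shows "card {S\<in>ksub Y r. S \<inter> B \<noteq> {}} + (card Y - card B choose r) = card Y choose r"
proof -
  have eq: "{S\<in>ksub Y r. S \<inter> B = {}} = ksub (Y - B) r" unfolding ksub_def by auto
  have fB: "finite B" using assms finite_subset by auto
  have "card (ksub Y r) = card {S\<in>ksub Y r. S \<inter> B \<noteq> {}} + card {S\<in>ksub Y r. S \<inter> B = {}}"
    using finite_ksub[OF assms(1)] by (subst card_Un_disjoint[symmetric]) (auto intro: arg_cong[where f=card])
  also have "card {S\<in>ksub Y r. S \<inter> B = {}} = card (Y - B) choose r"
    unfolding eq by (rule card_ksub) (use assms in auto)
  also have "card (Y - B) = card Y - card B" using assms fB by (simp add: card_Diff_subset)
  finally show ?thesis using card_ksub[OF assms(1)] by simp
qed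

lemma exists_outside:
  assumes "finite Y" "S \<subseteq> Y" "card S < card Y"
  shows "\<exists>y\<in>Y. y \<notin> S"
proof (rule ccontr)
  assume "\<not> (\<exists>y\<in>Y. y \<notin> S)"
  then have "Y \<subseteq> S" by auto
  then have "card Y \<le> card S" by (rule card_mono[OF finite_subset[OF assms(2,1)]])
  then show False using assms(3) by simp
qed

lemma arith_XL1:
  fixes a0 a1 b0 b1 N k :: nat
  assumes "a0 + b0 + (N - k choose k) \<le> (N choose k) + 1"
    "a1 + b1 + (N - (k - 1) choose (k - 1)) \<le> (N choose (k - 1)) + 1" "k \<ge> 2" "2 * k \<le> N"
  shows "a0 + a1 + (b0 + b1) + (Suc N - k choose k) \<le> (Suc N choose k) + 1"
proof -
  obtain j where k: "k = Suc (Suc j)" using assms(3) by (cases k; cases "k - 1") auto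
  define t where "t = N - k"
  have t1: "Suc N - k = Suc t" "N - (k - 1) = Suc t" using assms(4) unfolding t_def k by auto
  have "j \<le> t" using assms(4) unfolding t_def k by auto
  then have pos: "(t choose j) \<ge> 1" by (simp add: Suc_le_eq)
  have e1: "(Suc t choose k) = (t choose Suc j) + (t choose k)" unfolding k by (rule binomial_Suc_Suc)
  have e2: "(Suc t choose (k - 1)) = (t choose j) + (t choose Suc j)" unfolding k by simp
  have e3: "(Suc N choose k) = (N choose (k - 1)) + (N choose k)" unfolding k by simp
  have a1: "a0 + b0 + (t choose k) \<le> (N choose k) + 1" using assms(1) unfolding t_def .
  have a2: "a1 + b1 + (Suc t choose (k - 1)) \<le> (N choose (k - 1)) + 1" using assms(2) t1(2) by simp
  show ?thesis unfolding t1(1) e1 e3 using a1 a2 pos e2 by linarith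
qed

lemma arith_XL2:
  fixes a0 a1 b0 N k :: nat
  assumes "a0 + b0 + (N - k choose k) \<le> (N choose k) + 1"
    "a1 + (N - k choose (k - 1)) \<le> (N choose (k - 1))" "k \<ge> 1" "2 * k \<le> N"
  shows "a0 + a1 + b0 + (Suc N - k choose k) \<le> (Suc N choose k) + 1"
proof -
  obtain j where k: "k = Suc j" using assms(3) by (cases k) auto
  define t where "t = N - k"
  have t1: "Suc N - k = Suc t" using assms(4) unfolding t_def k by auto
  have e1: "(Suc t choose k) = (t choose (k - 1)) + (t choose k)" unfolding k by simp
  have e3: "(Suc N choose k) = (N choose (k - 1)) + (N choose k)" unfolding k by simp
  have a1: "a0 + b0 + (t choose k) \<le> (N choose k) + 1" using assms(1) unfolding t_def .
  have a2: "a1 + (t choose (k - 1)) \<le> (N choose (k - 1))" using assms(2) unfolding t_def .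
  show ?thesis unfolding t1 e1 e3 using a1 a2 by linarith
qed


lemma cross_sym: "cross A B \<Longrightarrow> cross B A"
  unfolding cross_def by blast

lemma ksub_finite_mem: "S \<in> ksub Y k \<Longrightarrow> finite Y \<Longrightarrow> finite S \<and> S \<subseteq> Y \<and> card S = k"
  unfolding ksub_def by (auto intro: finite_subset)

lemma stable_F0_nonempty:
  assumes "finite Y" "z \<in> Y" "A \<subseteq> ksub Y k" "A \<noteq> {}" "\<forall>y\<in>Y-{z}. stable y z A" "k < card Y"
  shows "F0 z A \<noteq> {}"
proof -
  obtain G where G: "G \<in> A" using assms by auto
  show ?thesis
  proof (cases "z \<in> G")
    case False then show ?thesis using G unfolding F0_def by auto
  next
    case True
    have GY: "finite G" "G \<subseteq> Y" "card G = k" using ksub_finite_mem[of G Y k] G assms by auto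
    have "card G > 0" using GY True card_gt_0_iff by blast
    then have "card (G - {z}) < card (Y - {z})" using GY True assms(1,2,6)
      by (simp add: card_Diff_singleton)
    then obtain y where y: "y \<in> Y - {z}" "y \<notin> G - {z}"
      using exists_outside[of "Y - {z}" "G - {z}"] GY assms(1) by auto
    then have "insert y (G - {z}) \<in> A" using assms(5) G True unfolding stable_def by auto
    then show ?thesis unfolding F0_def using y by auto
  qed
qed

lemma stable_F1_cross:
  assumes "finite Y" "z \<in> Y" "A \<subseteq> ksub Y ka" "B \<subseteq> ksub Y kb" "cross A B"
    "\<forall>y\<in>Y-{z}. stable y z A" "ka + kb < card Y + 1"
  shows "cross (F1 z A) (F1 z B)"
  unfolding cross_def
proof (intro ballI notI)
  fix S T assume S: "S \<in> F1 z A" and T: "T \<in> F1 z B" and disj: "S \<inter> T = {}"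
  obtain G where G: "G \<in> A" "z \<in> G" "S = G - {z}" using S by (rule F1_memE)
  obtain H where H: "H \<in> B" "z \<in> H" "T = H - {z}" using T by (rule F1_memE)
  have GY: "finite G" "G \<subseteq> Y" "card G = ka" using ksub_finite_mem[of G Y ka] G assms by auto
  have HY: "finite H" "H \<subseteq> Y" "card H = kb" using ksub_finite_mem[of H Y kb] H assms by auto
  have "card (S \<union> T) \<le> card S + card T" by (rule card_Un_le)
  also have "\<dots> = ka - 1 + (kb - 1)" using G H GY HY by (simp add: card_Diff_singleton)
  moreover have "card G > 0" "card H > 0" using GY HY G H card_gt_0_iff by blast+
  ultimately have cST: "card (S \<union> T) < card (Y - {z})" using assms(1,2,7) GY HY
    by (simp add: card_Diff_singleton)
  have "S \<union> T \<subseteq> Y - {z}" using G H GY HY by auto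
  then obtain y where y: "y \<in> Y - {z}" "y \<notin> S \<union> T"
    using exists_outside[OF _ _ cST] assms(1) by auto
  have "y \<notin> G" using y G by auto
  then have "insert y (G - {z}) \<in> A" using assms(6) G y unfolding stable_def by auto
  moreover have "insert y (G - {z}) \<inter> H = {}" using y G H disj by auto
  ultimately show False using H assms(5) unfolding cross_def by blast
qed



lemma XL_comp:
  assumes "finite Y" "2 * k = card Y" "A \<subseteq> ksub Y k" "B \<subseteq> ksub Y k" "cross A B"
  shows "card A + card B \<le> card Y choose k"
proof -
  let ?c = "\<lambda>G. Y - G"
  have inj: "inj_on ?c A"
  proof (rule inj_onI)
    fix a b assume "a \<in> A" "b \<in> A" "Y - a = Y - b"
    then show "a = b" using assms(3) unfolding ksub_def by auto
  qed
  have sub: "?c ` A \<subseteq> ksub Y k"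
  proof
    fix S assume "S \<in> ?c ` A"
    then obtain a where a: "a \<in> A" "S = Y - a" by auto
    then have "a \<subseteq> Y" "card a = k" using assms(3) unfolding ksub_def by auto
    then have "card (Y - a) = k" using assms(1,2) by (simp add: card_Diff_subset finite_subset)
    then show "S \<in> ksub Y k" using a unfolding ksub_def by auto
  qed
  have disj: "?c ` A \<inter> B = {}"
  proof (rule ccontr)
    assume "?c ` A \<inter> B \<noteq> {}"
    then obtain a where "a \<in> A" "Y - a \<in> B" by auto
    then show False using assms(5) unfolding cross_def by blast
  qed
  have "card (?c ` A) + card B = card (?c ` A \<union> B)"
    using disj finite_subset[OF sub finite_ksub[OF assms(1)]] finite_subset[OF assms(4) finite_ksub[OF assms(1)]]
    by (simp add: card_Un_disjoint)
  also have "\<dots> \<le> card (ksub Y k)" using sub assms(4) finite_ksub[OF assms(1)] by (intro card_mono) auto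
  finally show ?thesis using card_image[OF inj] card_ksub[OF assms(1)] by simp
qed

lemma XL:
  "finite Y \<Longrightarrow> card Y = N \<Longrightarrow> 2 * k \<le> N \<Longrightarrow> A \<subseteq> ksub Y k \<Longrightarrow> B \<subseteq> ksub Y k \<Longrightarrow>
   A \<noteq> {} \<Longrightarrow> B \<noteq> {} \<Longrightarrow> cross A B \<Longrightarrow>
   card A + card B + (N - k choose k) \<le> (N choose k) + 1"
proof (induction N arbitrary: Y k A B)
  case 0
  then have "k = 0" by simp
  then have "A = {{}}" "B = {{}}" using 0 ksub_empty0[of Y] by auto
  then show ?case using 0 unfolding cross_def by auto
next
  case (Suc N)
  note prems = Suc.prems
  have finA: "finite A" "finite B" using finite_subset[OF prems(4) finite_ksub[OF prems(1)]]
    finite_subset[OF prems(5) finite_ksub[OF prems(1)]] by auto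
  show ?case
  proof (cases "k = 0")
    case True
    then have "A = {{}}" "B = {{}}" using prems ksub_empty0[of Y] by auto
    then show ?thesis using prems unfolding cross_def by auto
  next
    case k0: False
    show ?thesis
    proof (cases "2 * k = Suc N")
      case True
      have "card A + card B \<le> Suc N choose k" using XL_comp[of Y k A B] prems True by simp
      moreover have "Suc N - k = k" using True by simp
      ultimately show ?thesis by simp
    next
      case False
      then have kN: "2 * k \<le> N" using prems by simp
      have "Y \<noteq> {}" using prems(2) by auto
      then obtain z where z: "z \<in> Y" by blast
      define Inv where "Inv A B \<longleftrightarrow> A \<subseteq> ksub Y k \<and> B \<subseteq> ksub Y k \<and> A \<noteq> {} \<and> B \<noteq> {} \<and> cross A B" for A B
      have pres: "Inv (shF y z A) (shF y z B)" if "y \<in> Y - {z}" "Inv A B" for A B y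
      proof -
        have fin: "finite A" "finite B" using that finite_subset[OF _ finite_ksub[OF prems(1)]]
          unfolding Inv_def by auto
        have "shF y z A \<noteq> {}" "shF y z B \<noteq> {}"
          using card_shF[of A y z] card_shF[of B y z] fin that unfolding Inv_def by auto
        then show ?thesis using that shF_ksub[of _ Y k y z] shF_cross[of A B y z] prems(1)
          unfolding Inv_def by auto
      qed
      obtain A' B' where AB: "Inv A' B'" "finite A'" "finite B'" "card A' = card A" "card B' = card B"
        "\<forall>y\<in>Y-{z}. stable y z A' \<and> stable y z B'"
      proof -
        have "Inv A B" using prems unfolding Inv_def by auto
        from stabilize[of A B Inv "Y - {z}" z, OF finA this pres] that show ?thesis by blast
      qed
      have I: "A' \<subseteq> ksub Y k" "B' \<subseteq> ksub Y k" "A' \<noteq> {}" "B' \<noteq> {}" "cross A' B'"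
        using AB(1) unfolding Inv_def by auto
      let ?Y = "Y - {z}"
      have cY: "card ?Y = N" "finite ?Y" using prems z by auto
      have A0: "F0 z A' \<subseteq> ksub ?Y k" "F0 z A' \<noteq> {}"
        using F0_ksub[OF I(1)] stable_F0_nonempty[OF prems(1) z I(1) I(3)] AB(6) kN prems by auto
      have B0: "F0 z B' \<subseteq> ksub ?Y k" "F0 z B' \<noteq> {}"
        using F0_ksub[OF I(2)] stable_F0_nonempty[OF prems(1) z I(2) I(4)] AB(6) kN prems by auto
      have c0: "cross (F0 z A') (F0 z B')" using I(5) unfolding cross_def F0_def by auto
      have IH0: "card (F0 z A') + card (F0 z B') + (N - k choose k) \<le> (N choose k) + 1"
        using Suc.IH[OF cY(2) cY(1) kN A0(1) B0(1) A0(2) B0(2) c0] .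
      have A1: "F1 z A' \<subseteq> ksub ?Y (k - 1)" using F1_ksub[OF I(1) prems(1)] .
      have B1: "F1 z B' \<subseteq> ksub ?Y (k - 1)" using F1_ksub[OF I(2) prems(1)] .
      have cA: "card A = card (F0 z A') + card (F1 z A')" using card_F01[OF AB(2)] AB(4) by simp
      have cB: "card B = card (F0 z B') + card (F1 z B')" using card_F01[OF AB(3)] AB(5) by simp
      have meet: "card (F1 z X') + (N - k choose (k - 1)) \<le> N choose (k - 1)"
        if X': "X' \<subseteq> ksub Y k" and W: "W \<in> F0 z W'" "W' \<subseteq> ksub Y k" and cr: "cross X' W'" for X' W W' 
      proof -
        have W': "W \<in> W'" "z \<notin> W" using W unfolding F0_def by auto
        have WY: "W \<subseteq> ?Y" "card W = k" using W' W(2) unfolding ksub_def by auto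
        have sub: "F1 z X' \<subseteq> {S\<in>ksub ?Y (k - 1). S \<inter> W \<noteq> {}}"
        proof
          fix S assume S: "S \<in> F1 z X'"
          obtain G where G: "G \<in> X'" "z \<in> G" "S = G - {z}" using S by (rule F1_memE)
          have "G \<inter> W \<noteq> {}" using cr G W' unfolding cross_def by auto
          then have "S \<inter> W \<noteq> {}" using G W' by auto
          then show "S \<in> {S\<in>ksub ?Y (k - 1). S \<inter> W \<noteq> {}}" using S F1_ksub[OF X' prems(1)] by auto
        qed
        have "card (F1 z X') \<le> card {S\<in>ksub ?Y (k - 1). S \<inter> W \<noteq> {}}"
          by (rule card_mono[OF _ sub]) (use finite_ksub[OF cY(2)] in auto)
        moreover have "card {S\<in>ksub ?Y (k - 1). S \<inter> W \<noteq> {}} + (N - k choose (k - 1)) = N choose (k - 1)"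
          using card_meet[OF cY(2) WY(1), of "k - 1"] cY WY by simp
        ultimately show ?thesis by linarith
      qed
      show ?thesis
      proof (cases "F1 z A' = {}")
        case A1e: True
        obtain W where W: "W \<in> F0 z A'" using A0 by auto
        have "card (F1 z B') + (N - k choose (k - 1)) \<le> N choose (k - 1)"
          using meet[OF I(2) W I(1) cross_sym[OF I(5)]] .
        then have "card (F0 z B') + card (F1 z B') + card (F0 z A') + (Suc N - k choose k) \<le> (Suc N choose k) + 1"
          using arith_XL2[of "card (F0 z B')" "card (F0 z A')" N k "card (F1 z B')"] IH0 k0 kN by simp
        then show ?thesis using cA cB A1e prems(2) by simp
      next
        case A1ne: False
        show ?thesis
        proof (cases "F1 z B' = {}")
          case B1e: True
          obtain W where W: "W \<in> F0 z B'" using B0 by auto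
          have "card (F1 z A') + (N - k choose (k - 1)) \<le> N choose (k - 1)"
            using meet[OF I(1) W I(2) I(5)] .
          then have "card (F0 z A') + card (F1 z A') + card (F0 z B') + (Suc N - k choose k) \<le> (Suc N choose k) + 1"
            using arith_XL2[of "card (F0 z A')" "card (F0 z B')" N k "card (F1 z A')"] IH0 k0 kN by simp
          then show ?thesis using cA cB B1e prems(2) by simp
        next
          case B1ne: False
          have c1: "cross (F1 z A') (F1 z B')"
            using stable_F1_cross[OF prems(1) z I(1) I(2) I(5)] AB(6) prems kN by auto
          have k2: "k \<ge> 2"
          proof (rule ccontr)
            assume "\<not> k \<ge> 2"
            then have "k - 1 = 0" by simp
            then have "F1 z A' = {{}}" "F1 z B' = {{}}" using A1 B1 A1ne B1ne ksub_empty0[OF cY(2)] by auto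
            then show False using c1 unfolding cross_def by auto
          qed
          have IH1: "card (F1 z A') + card (F1 z B') + (N - (k - 1) choose (k - 1)) \<le> (N choose (k - 1)) + 1"
            using Suc.IH[OF cY(2) cY(1) _ A1 B1 A1ne B1ne c1] kN by simp
          show ?thesis using arith_XL1[OF IH0 IH1 k2 kN] cA cB prems(2) by (simp add: ac_simps)
        qed
      qed
    qed
  qed
qed



definition SC :: "nat \<Rightarrow> nat set set \<Rightarrow> nat set set \<Rightarrow> bool" where
  "SC j P Q \<longleftrightarrow> (\<forall>T\<in>Q. \<forall>S. S \<subseteq> T \<longrightarrow> card S = j \<longrightarrow> S \<in> P)"

lemma card_swap: "z \<in> S \<Longrightarrow> y \<notin> S \<Longrightarrow> card (insert y (S - {z})) = card S"
proof (cases "finite S")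
  case True
  assume a: "z \<in> S" "y \<notin> S"
  have "card S > 0" using True a card_gt_0_iff by blast
  then show ?thesis using True a by (simp add: card_Diff_singleton)
next
  case False
  then show ?thesis by simp
qed

lemma SC_shF:
  assumes "SC j P Q" "y \<noteq> z"
  shows "SC j (shF y z P) (shF y z Q)"
  unfolding SC_def
proof (intro ballI allI impI)
  fix T S assume T: "T \<in> shF y z Q" and ST: "S \<subseteq> T" and cS: "card S = j"
  from T show "S \<in> shF y z P"
  proof (cases rule: shF_cases)
    case 1
    have SP: "S \<in> P" using assms(1) 1 ST cS unfolding SC_def by auto
    show ?thesis
    proof (cases "sh y z S = S")
      case True then show ?thesis using SP shF_mem_fixed by metis
    next
      case False
      then have zy: "z \<in> S" "y \<notin> S" "sh y z S = insert y (S - {z})" unfolding sh_def by (auto split: if_splits)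
      have c: "card (insert y (S - {z})) = j" using card_swap[OF zy(1,2)] cS by simp
      have "insert y (S - {z}) \<in> P"
      proof (cases "y \<in> T")
        case True
        then have "insert y (S - {z}) \<subseteq> T" using ST by auto
        then show ?thesis using assms(1) 1 c unfolding SC_def by auto
      next
        case False
        then have "sh y z T = insert y (T - {z})" using zy ST unfolding sh_def by auto
        moreover have "insert y (S - {z}) \<subseteq> insert y (T - {z})" using ST by auto
        ultimately show ?thesis using assms(1) 1 c unfolding SC_def by auto
      qed
      then show ?thesis using SP zy unfolding shF_def by auto
    qed
  next
    case (2 H)
    show ?thesis
    proof (cases "y \<in> S")
      case False
      then have "S \<subseteq> H" "z \<notin> S" using ST 2 by auto
      then have "S \<in> P" "sh y z S = S" using assms(1) 2 cS unfolding SC_def sh_def by auto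
      then show ?thesis by (intro shF_mem_fixed)
    next
      case True
      define S0 where "S0 = insert z (S - {y})"
      have zS: "z \<notin> S" using ST 2 assms(2) by auto
      have "S0 \<subseteq> H" using ST 2 True unfolding S0_def by auto
      moreover have "card S0 = j" using card_swap[of y S z] True zS cS unfolding S0_def by simp
      ultimately have "S0 \<in> P" using assms(1) 2 unfolding SC_def by auto
      moreover have "sh y z S0 = S" unfolding sh_def S0_def using True zS assms(2) by auto
      ultimately show ?thesis using shF_mem_sh[OF assms(2)] by metis
    qed
  qed
qed

lemma Z_comp:
  assumes "finite Y" "card Y = 2 * j + 2" "P \<subseteq> ksub Y j" "Q \<subseteq> ksub Y (j + 2)" "cross P Q"
  shows "card P + card Q \<le> card Y choose j"
proof -
  let ?c = "\<lambda>G. Y - G"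
  have inj: "inj_on ?c P"
  proof (rule inj_onI)
    fix a b assume "a \<in> P" "b \<in> P" "Y - a = Y - b"
    then show "a = b" using assms(3) unfolding ksub_def by auto
  qed
  have sub: "?c ` P \<subseteq> ksub Y (j + 2)"
  proof
    fix S assume "S \<in> ?c ` P"
    then obtain a where a: "a \<in> P" "S = Y - a" by auto
    then have "a \<subseteq> Y" "card a = j" using assms(3) unfolding ksub_def by auto
    then have "card (Y - a) = j + 2" using assms(1,2) by (simp add: card_Diff_subset finite_subset)
    then show "S \<in> ksub Y (j + 2)" using a unfolding ksub_def by auto
  qed
  have disj: "?c ` P \<inter> Q = {}"
  proof (rule ccontr)
    assume "?c ` P \<inter> Q \<noteq> {}"
    then obtain a where "a \<in> P" "Y - a \<in> Q" by auto
    then show False using assms(5) unfolding cross_def by blast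
  qed
  have "card (?c ` P) + card Q = card (?c ` P \<union> Q)"
    using disj finite_subset[OF sub finite_ksub[OF assms(1)]] finite_subset[OF assms(4) finite_ksub[OF assms(1)]]
    by (simp add: card_Un_disjoint)
  also have "\<dots> \<le> card (ksub Y (j + 2))" using sub assms(4) finite_ksub[OF assms(1)] by (intro card_mono) auto
  also have "\<dots> = card Y choose (j + 2)" by (rule card_ksub[OF assms(1)])
  also have "\<dots> = card Y choose j" using assms(2) binomial_symmetric[of "j + 2" "card Y"] by simp
  finally show ?thesis using card_image[OF inj] by simp
qed

lemma Zlemma:
  "finite Y \<Longrightarrow> card Y = N \<Longrightarrow> 2 * j + 2 \<le> N \<Longrightarrow> P \<subseteq> ksub Y j \<Longrightarrow> Q \<subseteq> ksub Y (j + 2) \<Longrightarrow>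
   cross P Q \<Longrightarrow> SC j P Q \<Longrightarrow> card P + card Q \<le> N choose j"
proof (induction N arbitrary: Y j P Q)
  case 0 then show ?case by simp
next
  case (Suc N)
  note prems = Suc.prems
  have finP: "finite P" "finite Q" using finite_subset[OF prems(4) finite_ksub[OF prems(1)]]
    finite_subset[OF prems(5) finite_ksub[OF prems(1)]] by auto
  show ?case
  proof (cases "j = 0")
    case True
    have Qe: "Q = {}"
    proof (rule ccontr)
      assume "Q \<noteq> {}"
      then obtain T where "T \<in> Q" by auto
      then have "{} \<in> P" using prems(7) True unfolding SC_def by auto
      then show False using \<open>T \<in> Q\<close> prems(6) unfolding cross_def by auto
    qed
    have "P \<subseteq> {{}}" using prems(4) True ksub_empty0[OF prems(1)] by auto
    then have "card P \<le> 1" using card_mono[of "{{}}" P] by auto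
    then show ?thesis using Qe True by simp
  next
    case j0: False
    show ?thesis
    proof (cases "2 * j + 2 = Suc N")
      case True
      show ?thesis using Z_comp[of Y j P Q] prems True by simp
    next
      case False
      then have kN: "2 * j + 2 \<le> N" using prems by simp
      have "Y \<noteq> {}" using prems(2) by auto
      then obtain z where z: "z \<in> Y" by blast
      define Inv where "Inv A B \<longleftrightarrow> A \<subseteq> ksub Y j \<and> B \<subseteq> ksub Y (j + 2) \<and> cross A B \<and> SC j A B" for A B
      have pres: "Inv (shF y z A) (shF y z B)" if "y \<in> Y - {z}" "Inv A B" for A B y
        using that shF_ksub[of _ Y _ y z] shF_cross[of A B y z] SC_shF[of j A B y z] prems(1)
        unfolding Inv_def by auto
      obtain A' B' where AB: "Inv A' B'" "finite A'" "finite B'" "card A' = card P" "card B' = card Q"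
        "\<forall>y\<in>Y-{z}. stable y z A' \<and> stable y z B'"
      proof -
        have "Inv P Q" using prems unfolding Inv_def by auto
        from stabilize[of P Q Inv "Y - {z}" z, OF finP this pres] that show ?thesis by blast
      qed
      have I: "A' \<subseteq> ksub Y j" "B' \<subseteq> ksub Y (j + 2)" "cross A' B'" "SC j A' B'"
        using AB(1) unfolding Inv_def by auto
      let ?Y = "Y - {z}"
      have cY: "card ?Y = N" "finite ?Y" using prems z by auto
      have c0: "cross (F0 z A') (F0 z B')" using I(3) unfolding cross_def F0_def by auto
      have s0: "SC j (F0 z A') (F0 z B')" using I(4) unfolding SC_def F0_def by blast
      have IH0: "card (F0 z A') + card (F0 z B') \<le> N choose j"
        using Suc.IH[OF cY(2) cY(1) kN F0_ksub[OF I(1)] F0_ksub[OF I(2)] c0 s0] .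
      have A1: "F1 z A' \<subseteq> ksub ?Y (j - 1)" using F1_ksub[OF I(1) prems(1)] .
      have B1: "F1 z B' \<subseteq> ksub ?Y (j - 1 + 2)" using F1_ksub[OF I(2) prems(1)] j0 by simp
      have c1: "cross (F1 z A') (F1 z B')"
        using stable_F1_cross[OF prems(1) z I(1) I(2) I(3)] AB(6) prems kN by auto
      have s1: "SC (j - 1) (F1 z A') (F1 z B')"
        unfolding SC_def
      proof (intro ballI allI impI)
        fix T S assume T: "T \<in> F1 z B'" and ST: "S \<subseteq> T" and cS: "card S = j - 1"
        obtain H where H: "H \<in> B'" "z \<in> H" "T = H - {z}" "z \<notin> T" using T by (rule F1_memE)
        have fH: "finite H" using I(2) H prems(1) unfolding ksub_def by (auto intro: finite_subset)
        have "finite S" using ST H fH by (auto intro: finite_subset)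
        moreover have "z \<notin> S" using ST H by auto
        ultimately have "card (insert z S) = j" using cS j0 by (simp add: card_insert_if)
        moreover have "insert z S \<subseteq> H" using ST H by auto
        ultimately have "insert z S \<in> A'" using I(4) H unfolding SC_def by auto
        moreover have "S = insert z S - {z}" using ST H by auto
        ultimately show "S \<in> F1 z A'" using F1_mem[of "insert z S" A' z] by simp
      qed
      have IH1: "card (F1 z A') + card (F1 z B') \<le> N choose (j - 1)"
        using Suc.IH[OF cY(2) cY(1) _ A1 B1 c1 s1] kN by simp
      have cA: "card P = card (F0 z A') + card (F1 z A')" using card_F01[OF AB(2)] AB(4) by simp
      have cB: "card Q = card (F0 z B') + card (F1 z B')" using card_F01[OF AB(3)] AB(5) by simp
      have "Suc N choose j = (N choose (j - 1)) + (N choose j)"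
        using j0 by (cases j) auto
      then show ?thesis using IH0 IH1 cA cB by linarith
    qed
  qed
qed



definition trivialF :: "nat set set \<Rightarrow> bool" where
  "trivialF F \<longleftrightarrow> (\<exists>x. \<forall>G\<in>F. x \<in> G)"

lemma card_image_le_ksub:
  assumes "finite Y" "inj_on f A" "f ` A \<subseteq> ksub Y r"
  shows "card A \<le> card Y choose r"
proof -
  have "card A = card (f ` A)" using card_image[OF assms(2)] by simp
  also have "\<dots> \<le> card (ksub Y r)" by (rule card_mono[OF finite_ksub[OF assms(1)] assms(3)])
  finally show ?thesis using card_ksub[OF assms(1)] by simp
qed

lemma inj_remove: "inj_on (\<lambda>G. G - R) {G. R \<subseteq> G}"
proof (rule inj_onI)
  fix a b assume "a \<in> {G. R \<subseteq> G}" "b \<in> {G. R \<subseteq> G}" "a - R = b - R"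
  then show "a = b" by blast
qed

lemma two_cover:
  assumes X: "finite X" "card X = m" and ij: "i \<in> X" "j \<in> X" "i \<noteq> j"
    and F: "F \<subseteq> ksub X k" "cross F F" "\<forall>G\<in>F. i \<in> G \<or> j \<in> G" "\<not> trivialF F"
    and k: "k \<ge> 2" "2 * k + 1 \<le> m"
  shows "card F + (m - k - 1 choose (k - 1)) \<le> (m - 1 choose (k - 1)) + 1"
proof -
  let ?Y = "X - {i, j}"
  have cY: "finite ?Y" "card ?Y = m - 2" using X ij by auto
  let ?Fij = "{G\<in>F. i \<in> G \<and> j \<in> G}" and ?Fi = "{G\<in>F. i \<in> G \<and> j \<notin> G}" and ?Fj = "{G\<in>F. i \<notin> G \<and> j \<in> G}"
  have finF: "finite F" using finite_subset[OF F(1) finite_ksub[OF X(1)]] .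
  have part: "F = ?Fij \<union> ?Fi \<union> ?Fj" using F(3) by auto
  have c1: "card (?Fij \<union> ?Fi) = card ?Fij + card ?Fi" by (rule card_Un_disjoint) (use finF in auto)
  have c2: "card (?Fij \<union> ?Fi \<union> ?Fj) = card (?Fij \<union> ?Fi) + card ?Fj" by (rule card_Un_disjoint) (use finF in auto)
  have cF: "card F = card ?Fij + card ?Fi + card ?Fj" using c1 c2 part by simp
  have memF: "G \<subseteq> X \<and> card G = k \<and> finite G" if "G \<in> F" for G
    using that F(1) X(1) unfolding ksub_def by (auto intro: finite_subset)
  have b1: "card ?Fij \<le> (m - 2) choose (k - 2)"
  proof -
    have "inj_on (\<lambda>G. G - {i, j}) ?Fij" by (rule inj_on_subset[OF inj_remove]) auto
    moreover have "(\<lambda>G. G - {i, j}) ` ?Fij \<subseteq> ksub ?Y (k - 2)"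
    proof
      fix S assume "S \<in> (\<lambda>G. G - {i, j}) ` ?Fij"
      then obtain G where G: "G \<in> F" "i \<in> G" "j \<in> G" "S = G - {i, j}" by auto
      then show "S \<in> ksub ?Y (k - 2)" using memF[OF G(1)] ij unfolding ksub_def by auto
    qed
    ultimately show ?thesis using card_image_le_ksub[OF cY(1)] cY(2) by metis
  qed
  let ?A = "(\<lambda>G. G - {i}) ` ?Fi" and ?B = "(\<lambda>G. G - {j}) ` ?Fj"
  have injA: "inj_on (\<lambda>G. G - {i}) ?Fi" by (rule inj_on_subset[OF inj_remove]) auto
  have injB: "inj_on (\<lambda>G. G - {j}) ?Fj" by (rule inj_on_subset[OF inj_remove]) auto
  have A: "?A \<subseteq> ksub ?Y (k - 1)"
  proof
    fix S assume "S \<in> ?A"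
    then obtain G where G: "G \<in> F" "i \<in> G" "j \<notin> G" "S = G - {i}" by auto
    then show "S \<in> ksub ?Y (k - 1)" using memF[OF G(1)] unfolding ksub_def by auto
  qed
  have B: "?B \<subseteq> ksub ?Y (k - 1)"
  proof
    fix S assume "S \<in> ?B"
    then obtain G where G: "G \<in> F" "i \<notin> G" "j \<in> G" "S = G - {j}" by auto
    then show "S \<in> ksub ?Y (k - 1)" using memF[OF G(1)] unfolding ksub_def by auto
  qed
  have Ane: "?A \<noteq> {}"
  proof -
    obtain G where "G \<in> F" "j \<notin> G" using F(4) unfolding trivialF_def by auto
    then have "G \<in> ?Fi" using F(3) by auto
    then show ?thesis by auto
  qed
  have Bne: "?B \<noteq> {}"
  proof -
    obtain G where "G \<in> F" "i \<notin> G" using F(4) unfolding trivialF_def by auto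
    then have "G \<in> ?Fj" using F(3) by auto
    then show ?thesis by auto
  qed
  have cAB: "cross ?A ?B"
    unfolding cross_def
  proof (intro ballI)
    fix a b assume "a \<in> ?A" "b \<in> ?B"
    then obtain G H where G: "G \<in> F" "i \<in> G" "j \<notin> G" "a = G - {i}"
      and H: "H \<in> F" "i \<notin> H" "j \<in> H" "b = H - {j}" by auto
    have "G \<inter> H \<noteq> {}" using F(2) G H unfolding cross_def by auto
    then show "a \<inter> b \<noteq> {}" using G H by auto
  qed
  have "card ?A + card ?B + (m - 2 - (k - 1) choose (k - 1)) \<le> (m - 2 choose (k - 1)) + 1"
    using XL[OF cY(1) cY(2) _ A B Ane Bne cAB] k by simp
  then have b2: "card ?Fi + card ?Fj + (m - k - 1 choose (k - 1)) \<le> (m - 2 choose (k - 1)) + 1"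
    using card_image[OF injA] card_image[OF injB] k by (simp add: algebra_simps)
  have pas: "(m - 1 choose (k - 1)) = (m - 2 choose (k - 2)) + (m - 2 choose (k - 1))"
  proof -
    define a where "a = m - 2"
    have a: "m - 1 = Suc a" "m - 2 = a" using k unfolding a_def by auto
    define b where "b = k - 2"
    have b: "k - 1 = Suc b" "k - 2 = b" using k unfolding b_def by auto
    show ?thesis unfolding a b by simp
  qed
  show ?thesis using cF b1 b2 pas by linarith
qed

lemma shift_trivial_cover:
  assumes "\<not> trivialF F" "trivialF (shF y z F)" "y \<noteq> z"
  shows "\<forall>G\<in>F. y \<in> G \<or> z \<in> G"
proof (rule ccontr)
  assume "\<not> (\<forall>G\<in>F. y \<in> G \<or> z \<in> G)"
  then obtain G where G: "G \<in> F" "y \<notin> G" "z \<notin> G" by auto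
  obtain c where c: "\<forall>H\<in>shF y z F. c \<in> H" using assms(2) unfolding trivialF_def by auto
  have "sh y z G = G" using G unfolding sh_def by auto
  then have "G \<in> shF y z F" using G(1) by (rule shF_mem_fixed[rotated])
  then have cG: "c \<in> G" using c by auto
  obtain H where H: "H \<in> F" "c \<notin> H" using assms(1) unfolding trivialF_def by auto
  have "sh y z H \<in> shF y z F" using shF_mem_sh[OF assms(3) H(1)] .
  then have "c \<in> sh y z H" using c by auto
  moreover have "c \<notin> H" using H by auto
  ultimately have "c = y" unfolding sh_def by (auto split: if_splits)
  then show False using cG G by auto
qed

lemma card_shF_pred:
  assumes "finite F" "y \<noteq> z" "\<And>G. Pr (sh y z G) = Pr G"
  shows "card {G\<in>shF y z F. Pr G} = card {G\<in>F. Pr G}"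
proof -
  have "{G\<in>shF y z F. Pr G} = shF y z {G\<in>F. Pr G}"
    unfolding shF_def using assms(3) by auto
  then show ?thesis using card_shF[of "{G\<in>F. Pr G}" y z] assms by simp
qed

lemma shF_measure_y:
  assumes "finite F" "y \<noteq> z" "\<not> stable y z F"
  shows "card {G\<in>shF y z F. y \<notin> G} < card {G\<in>F. y \<notin> G}"
proof -
  have fin: "finite {G\<in>F. y \<notin> G}" using assms by auto
  have sub: "{G\<in>shF y z F. y \<notin> G} \<subseteq> {G\<in>F. y \<notin> G \<and> sh y z G \<in> F}"
  proof
    fix G assume "G \<in> {G\<in>shF y z F. y \<notin> G}"
    then have G: "G \<in> shF y z F" "y \<notin> G" by auto
    from G(1) show "G \<in> {G\<in>F. y \<notin> G \<and> sh y z G \<in> F}"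
    proof (cases rule: shF_cases)
      case 1 then show ?thesis using G by auto
    next
      case (2 H) then show ?thesis using G by auto
    qed
  qed
  obtain G where G: "G \<in> F" "z \<in> G" "y \<notin> G" "insert y (G - {z}) \<notin> F"
    using assms(3) unfolding stable_def by auto
  then have "sh y z G \<notin> F" unfolding sh_def by auto
  then have "{G\<in>shF y z F. y \<notin> G} \<subset> {G\<in>F. y \<notin> G}" using sub G by auto
  then show ?thesis by (rule psubset_card_mono[OF fin])
qed



lemma HM_stable:
  fixes m k :: nat
  assumes F: "F \<subseteq> ksub {1..m} k" "cross F F" "\<not> trivialF F"
    and k: "k \<ge> 2" "2 * k + 1 \<le> m"
    and st: "\<forall>q\<in>{3..m}. stable 1 q F \<and> stable 2 q F"
  shows "card F + (m - k - 1 choose (k - 1)) \<le> (m - 1 choose (k - 1)) + 1"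
proof -
  let ?X = "{1..m}" and ?Y = "{3..m}"
  have X: "finite ?X" "card ?X = m" by auto
  have Y: "finite ?Y" "card ?Y = m - 2" by auto
  have finF: "finite F" using finite_subset[OF F(1) finite_ksub[OF X(1)]] .
  have memF: "G \<subseteq> ?X \<and> card G = k \<and> finite G" if "G \<in> F" for G
    using that F(1) unfolding ksub_def by (auto intro: finite_subset)
  let ?F12 = "{G\<in>F. 1 \<in> G \<and> 2 \<in> G}" and ?Q = "{G\<in>F. 1 \<notin> G \<and> 2 \<notin> G}"
    and ?Fo = "{G\<in>F. (1 \<in> G \<or> 2 \<in> G) \<and> \<not> (1 \<in> G \<and> 2 \<in> G)}"
  let ?P = "(\<lambda>G. G - {1, 2}) ` ?F12"
  let ?H = "{G\<in>ksub ?X k. 1 \<in> G \<and> 2 \<in> G}"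
  have injP: "inj_on (\<lambda>G. G - {1, 2}) ?F12" by (rule inj_on_subset[OF inj_remove]) auto
  have Psub: "?P \<subseteq> ksub ?Y (k - 2)"
  proof
    fix S assume "S \<in> ?P"
    then obtain G where G: "G \<in> F" "1 \<in> G" "2 \<in> G" "S = G - {1, 2}" by auto
    have "G - {1,2} \<subseteq> ?Y" using memF[OF G(1)] by auto
    moreover have "card (G - {1,2}) = k - 2" using memF[OF G(1)] G by (simp add: card_Diff_subset)
    ultimately show "S \<in> ksub ?Y (k - 2)" unfolding ksub_def G(4) by auto
  qed
  have Qsub: "?Q \<subseteq> ksub ?Y (k - 2 + 2)"
  proof
    fix G assume "G \<in> ?Q"
    then have "G \<in> F" "1 \<notin> G" "2 \<notin> G" by auto
    then have GX: "G \<subseteq> ?X" "card G = k" using memF by auto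
    have "G \<subseteq> ?Y"
    proof
      fix x assume "x \<in> G"
      then have "x \<in> ?X" "x \<noteq> 1" "x \<noteq> 2" using GX \<open>1 \<notin> G\<close> \<open>2 \<notin> G\<close> by auto
      then show "x \<in> ?Y" by auto
    qed
    then show "G \<in> ksub ?Y (k - 2 + 2)" unfolding ksub_def using k GX by auto
  qed
  have cPQ: "cross ?P ?Q"
    unfolding cross_def
  proof (intro ballI)
    fix a b assume "a \<in> ?P" "b \<in> ?Q"
    then obtain G where G: "G \<in> F" "1 \<in> G" "2 \<in> G" "a = G - {1, 2}" and b: "b \<in> F" "1 \<notin> b" "2 \<notin> b" by auto
    have "G \<inter> b \<noteq> {}" using F(2) G b unfolding cross_def by auto
    then show "a \<inter> b \<noteq> {}" using G b by auto
  qed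
  have scPQ: "SC (k - 2) ?P ?Q"
    unfolding SC_def
  proof (intro ballI allI impI)
    fix T S assume T: "T \<in> ?Q" and ST: "S \<subseteq> T" and cS: "card S = k - 2"
    have TF: "T \<in> F" "1 \<notin> T" "2 \<notin> T" using T by auto
    have Tm: "T \<subseteq> ?X" "card T = k" "finite T" using memF[OF TF(1)] by auto
    have "card (T - S) = 2" using Tm ST cS k by (simp add: card_Diff_subset finite_subset)
    then obtain q q' where qq: "T - S = {q, q'}" "q \<noteq> q'" by (auto simp: card_2_iff)
    have qT: "q \<in> T" "q' \<in> T" using qq(1) by blast+
    have "q \<in> ?X" "q \<noteq> 1" "q \<noteq> 2" "q' \<in> ?X" "q' \<noteq> 1" "q' \<noteq> 2" using qT TF Tm by auto
    then have q3: "q \<in> ?Y" "q' \<in> ?Y" "q \<in> T" "q' \<in> T" using qT by auto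
    have G1: "insert 1 (T - {q}) \<in> F" using st q3 TF unfolding stable_def by auto
    have G2: "insert 2 (insert 1 (T - {q}) - {q'}) \<in> F"
      using st q3 G1 TF qq unfolding stable_def by auto
    have eq: "insert 2 (insert 1 (T - {q}) - {q'}) = S \<union> {1, 2}" using qq ST TF q3 by auto
    have "S \<union> {1,2} \<in> ?F12" using G2 eq by auto
    moreover have "S = (S \<union> {1,2}) - {1,2}" using ST TF by auto
    ultimately show "S \<in> ?P" by blast
  qed
  have Z: "card ?P + card ?Q \<le> (m - 2) choose (k - 2)"
    using Zlemma[OF Y(1) Y(2) _ Psub Qsub cPQ scPQ] k by simp
  have cH: "(m - 2) choose (k - 2) \<le> card ?H"
  proof -
    have inj: "inj_on (\<lambda>S. S \<union> {1, 2}) (ksub ?Y (k - 2))"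
    proof (rule inj_onI)
      fix a b assume "a \<in> ksub ?Y (k - 2)" "b \<in> ksub ?Y (k - 2)" "a \<union> {1, 2} = b \<union> {1, 2}"
      then have ab: "a \<subseteq> ?Y" "b \<subseteq> ?Y" "a \<union> {1, 2} = b \<union> {1, 2}" unfolding ksub_def by auto
      have "a = (a \<union> {1, 2}) - {1, 2}" "b = (b \<union> {1, 2}) - {1, 2}" using ab(1,2) by auto
      then show "a = b" using ab(3) by metis
    qed
    have sub: "(\<lambda>S. S \<union> {1, 2}) ` (ksub ?Y (k - 2)) \<subseteq> ?H"
    proof
      fix G assume "G \<in> (\<lambda>S. S \<union> {1, 2}) ` (ksub ?Y (k - 2))"
      then obtain S where S: "S \<subseteq> ?Y" "card S = k - 2" "G = S \<union> {1, 2}" unfolding ksub_def by auto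
      have "finite S" using S(1) finite_subset by auto
      moreover have "1 \<notin> S" "2 \<notin> S" using S by auto
      ultimately have "card G = k" using S k by (simp add: card_insert_if)
      then show "G \<in> ?H" using S k unfolding ksub_def by auto
    qed
    have "card (ksub ?Y (k - 2)) \<le> card ?H"
      using card_image[OF inj] card_mono[OF _ sub] finite_ksub[OF X(1)] by fastforce
    then show ?thesis using card_ksub[OF Y(1)] Y(2) by simp
  qed
  let ?F' = "?Fo \<union> ?H"
  have finH: "finite ?H" using finite_ksub[OF X(1)] by auto
  have cF: "card F = card ?Fo + card ?F12 + card ?Q"
  proof -
    have "F = (?Fo \<union> ?F12) \<union> ?Q" by auto
    moreover have "card ((?Fo \<union> ?F12) \<union> ?Q) = card (?Fo \<union> ?F12) + card ?Q"
      by (rule card_Un_disjoint) (use finF in auto)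
    moreover have "card (?Fo \<union> ?F12) = card ?Fo + card ?F12"
      by (rule card_Un_disjoint) (use finF in auto)
    ultimately show ?thesis by simp
  qed
  have cF': "card ?F' = card ?Fo + card ?H"
    by (rule card_Un_disjoint) (use finF finH in auto)
  have le: "card F \<le> card ?F'" using cF cF' Z cH card_image[OF injP] by linarith
  have F'sub: "?F' \<subseteq> ksub ?X k" using F(1) by auto
  have F'cross: "cross ?F' ?F'" using F(2) unfolding cross_def by blast
  have F'cov: "\<forall>G\<in>?F'. 1 \<in> G \<or> 2 \<in> G" by auto
  have F'nt: "\<not> trivialF ?F'"
    unfolding trivialF_def
  proof
    assume "\<exists>x. \<forall>G\<in>?F'. x \<in> G"
    then obtain x where x: "\<forall>G\<in>?F'. x \<in> G" by auto
    obtain G where G: "G \<in> F" "x \<notin> G" using F(3) unfolding trivialF_def by auto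
    have Gm: "G \<subseteq> ?X" "card G = k" "finite G" using memF[OF G(1)] by auto
    show False
    proof (cases "1 \<in> G \<or> 2 \<in> G")
      case True
      show False
      proof (cases "1 \<in> G \<and> 2 \<in> G")
        case True
        then have "G \<in> ?H" using G(1) F(1) by blast
        then have "x \<in> G" using x by blast
        then show False using G(2) by blast
      next
        case False
        then have "G \<in> ?Fo" using G(1) \<open>1 \<in> G \<or> 2 \<in> G\<close> by blast
        then have "x \<in> G" using x by blast
        then show False using G(2) by blast
      qed
    next
      case False
      have "card G \<noteq> 0" using Gm k by simp
      then have "G \<noteq> {}" by auto
      then obtain g where g: "g \<in> G" by auto
      have "g \<in> ?X" using Gm(1) g by blast
      moreover have "g \<noteq> 1" "g \<noteq> 2" using False g by blast+
      ultimately have "g \<in> ?X" "g \<noteq> 1" "g \<noteq> 2" by auto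
      then have g3: "g \<in> ?Y" by auto
      have s1: "stable 1 g F" and s2: "stable 2 g F" using st g3 by auto
      have n1: "1 \<notin> G" and n2: "2 \<notin> G" using False by auto
      have i2: "insert 2 (G - {g}) \<in> F" using s2 G(1) g n2 unfolding stable_def by simp
      have i1: "insert 1 (G - {g}) \<in> F" using s1 G(1) g n1 unfolding stable_def by simp
      have m2: "insert 2 (G - {g}) \<in> ?Fo" using i2 n1 by simp
      have m1: "insert 1 (G - {g}) \<in> ?Fo" using i1 n2 by simp
      show False
      proof (cases "x = 1")
        case True
        have "x \<in> insert 2 (G - {g})" using x m2 by (meson UnI1)
        then show False using True n1 by auto
      next
        case x1: False
        have "x \<in> insert 1 (G - {g})" using x m1 by (meson UnI1)
        then show False using x1 G(2) by auto
      qed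
    qed
  qed
  have "card ?F' + (m - k - 1 choose (k - 1)) \<le> (m - 1 choose (k - 1)) + 1"
    using two_cover[OF X(1) X(2) _ _ _ F'sub F'cross F'cov F'nt k] k by simp
  then show ?thesis using le by linarith
qed



definition muF :: "nat set set \<Rightarrow> nat" where
  "muF F = card {G\<in>F. 1 \<notin> G} + card {G\<in>F. 2 \<notin> G}"

lemma HM_shift_step:
  fixes m k :: nat
  assumes F: "F \<subseteq> ksub {1..m} k" "cross F F" "\<not> trivialF F"
    and k: "k \<ge> 2" "2 * k + 1 \<le> m"
    and yq: "y = 1 \<or> y = 2" "q \<in> {3..m}" "\<not> stable y q F"
    and IH: "\<And>F'. muF F' < muF F \<Longrightarrow> F' \<subseteq> ksub {1..m} k \<Longrightarrow> cross F' F' \<Longrightarrow> \<not> trivialF F' \<Longrightarrow>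
               card F' + (m - k - 1 choose (k - 1)) \<le> (m - 1 choose (k - 1)) + 1"
  shows "card F + (m - k - 1 choose (k - 1)) \<le> (m - 1 choose (k - 1)) + 1"
proof -
  let ?X = "{1..m}"
  have X: "finite ?X" "card ?X = m" by auto
  have finF: "finite F" using finite_subset[OF F(1) finite_ksub[OF X(1)]] .
  have yqne: "y \<noteq> q" using yq by auto
  have yX: "y \<in> ?X" "q \<in> ?X" using yq k by auto
  let ?F = "shF y q F"
  have F1: "?F \<subseteq> ksub ?X k" using shF_ksub[OF F(1) yX(1) X(1)] .
  have F2: "cross ?F ?F" using shF_cross[OF F(2) yqne] .
  have cF: "card ?F = card F" using card_shF[OF finF yqne] .
  show ?thesis
  proof (cases "trivialF ?F")
    case True
    have cov: "\<forall>G\<in>F. y \<in> G \<or> q \<in> G" using shift_trivial_cover[OF F(3) True yqne] .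
    show ?thesis using two_cover[OF X(1) X(2) yX(1) yX(2) yqne F(1) F(2) cov F(3) k] .
  next
    case False
    define y' where "y' = (if y = 1 then 2 else (1::nat))"
    have y': "y' \<noteq> y" "y' \<noteq> q" "y' = 1 \<or> y' = 2" using yq unfolding y'_def by auto
    have a: "card {G\<in>?F. y \<notin> G} < card {G\<in>F. y \<notin> G}" using shF_measure_y[OF finF yqne yq(3)] .
    have b: "card {G\<in>?F. y' \<notin> G} = card {G\<in>F. y' \<notin> G}"
      by (rule card_shF_pred[OF finF yqne]) (use y' in \<open>auto simp: sh_def\<close>)
    have "muF ?F < muF F" using a b yq(1) y' unfolding muF_def by auto
    then have "card ?F + (m - k - 1 choose (k - 1)) \<le> (m - 1 choose (k - 1)) + 1"
      using IH F1 F2 False by blast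
    then show ?thesis using cF by simp
  qed
qed

lemma HM:
  fixes m k :: nat
  assumes "F \<subseteq> ksub {1..m} k" "cross F F" "\<not> trivialF F" "k \<ge> 2" "2 * k + 1 \<le> m"
  shows "card F + (m - k - 1 choose (k - 1)) \<le> (m - 1 choose (k - 1)) + 1"
proof -
  have "\<forall>F. muF F = n \<longrightarrow> F \<subseteq> ksub {1..m} k \<longrightarrow> cross F F \<longrightarrow> \<not> trivialF F \<longrightarrow>
          card F + (m - k - 1 choose (k - 1)) \<le> (m - 1 choose (k - 1)) + 1" for n
  proof (induction n rule: less_induct)
    case (less n)
    show ?case
    proof (intro allI impI)
      fix F assume h: "muF F = n" "F \<subseteq> ksub {1..m} k" "cross F F" "\<not> trivialF F"
      have IH: "\<And>F'. muF F' < muF F \<Longrightarrow> F' \<subseteq> ksub {1..m} k \<Longrightarrow> cross F' F' \<Longrightarrow> \<not> trivialF F' \<Longrightarrow>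
               card F' + (m - k - 1 choose (k - 1)) \<le> (m - 1 choose (k - 1)) + 1"
        using less.IH h(1) by blast
      show "card F + (m - k - 1 choose (k - 1)) \<le> (m - 1 choose (k - 1)) + 1"
      proof (cases "\<forall>q\<in>{3..m}. stable 1 q F \<and> stable 2 q F")
        case True
        show ?thesis using HM_stable[OF h(2,3,4) assms(4,5) True] .
      next
        case False
        then obtain y q where "y = 1 \<or> y = 2" "q \<in> {3..m}" "\<not> stable y q F" by blast
        show ?thesis using HM_shift_step[OF h(2,3,4) assms(4,5) \<open>y = 1 \<or> y = 2\<close> \<open>q \<in> {3..m}\<close> \<open>\<not> stable y q F\<close> IH] .
      qed
    qed
  qed
  then show ?thesis using assms by blast
qed



lemma kv_ksub: "kneser_vertices m n = ksub {1..m} n"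
  unfolding kneser_vertices_def ksub_def by auto

lemma indep_iff: "independent V kneser_adj S \<longleftrightarrow> S \<subseteq> V \<and> cross S S"
  unfolding independent_def kneser_adj_def cross_def by auto

lemma count_contain:
  assumes "finite X" "R \<subseteq> X" "F \<subseteq> ksub X k" "\<forall>G\<in>F. R \<subseteq> G"
  shows "card F \<le> (card X - card R) choose (k - card R)"
proof -
  have fR: "finite R" using finite_subset[OF assms(2,1)] .
  have inj: "inj_on (\<lambda>G. G - R) F" by (rule inj_on_subset[OF inj_remove]) (use assms in auto)
  have "(\<lambda>G. G - R) ` F \<subseteq> ksub (X - R) (k - card R)"
  proof
    fix S assume "S \<in> (\<lambda>G. G - R) ` F"
    then obtain G where G: "G \<in> F" "S = G - R" by auto
    have GX: "G \<subseteq> X" "card G = k" "R \<subseteq> G" using G assms unfolding ksub_def by auto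
    have "finite G" using finite_subset[OF GX(1) assms(1)] .
    note GX = GX this
    then show "S \<in> ksub (X - R) (k - card R)" unfolding ksub_def G(2) using GX by (auto simp: card_Diff_subset fR)
  qed
  from card_image_le_ksub[OF _ inj this] show ?thesis using assms fR by (simp add: card_Diff_subset)
qed

lemma EKR:
  fixes m n :: nat
  assumes "F \<subseteq> ksub {1..m} n" "cross F F" "0 < n" "2 * n < m"
  shows "card F \<le> (m - 1 choose (n - 1))"
proof (cases "trivialF F")
  case True
  then obtain x where x: "\<forall>G\<in>F. x \<in> G" unfolding trivialF_def by auto
  show ?thesis
  proof (cases "F = {}")
    case True then show ?thesis by simp
  next
    case False
    then obtain G where "G \<in> F" by auto
    then have "x \<in> G" "G \<subseteq> {1..m}" using x assms(1) unfolding ksub_def by auto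
    then have "x \<in> {1..m}" by blast
    then show ?thesis using count_contain[of "{1..m}" "{x}" F n] assms(1) x by auto
  qed
next
  case False
  have n2: "n \<ge> 2"
  proof (rule ccontr)
    assume "\<not> n \<ge> 2"
    then have n1: "n = 1" using assms by simp
    have "F \<noteq> {}" using False unfolding trivialF_def by auto
    then obtain G where G: "G \<in> F" by auto
    then obtain a where a: "G = {a}" using assms(1) n1 unfolding ksub_def by (auto simp: card_1_singleton_iff)
    have "\<forall>H\<in>F. a \<in> H"
    proof
      fix H assume H: "H \<in> F"
      then obtain b where b: "H = {b}" using assms(1) n1 unfolding ksub_def by (auto simp: card_1_singleton_iff)
      have "G \<inter> H \<noteq> {}" using assms(2) G H unfolding cross_def by auto
      then show "a \<in> H" using a b by auto
    qed
    then show False using False unfolding trivialF_def by auto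
  qed
  have "card F + (m - n - 1 choose (n - 1)) \<le> (m - 1 choose (n - 1)) + 1"
    using HM[OF assms(1,2) False n2] assms by simp
  moreover have "(m - n - 1 choose (n - 1)) \<ge> 1" using assms by (simp add: Suc_le_eq)
  ultimately show ?thesis by linarith
qed

lemma core_P:
  fixes m n :: nat
  assumes F: "F \<subseteq> ksub {1..m} n" "cross F F"
    and AD: "A \<in> ksub {1..m} n" "D \<in> ksub {1..m} n" "A \<inter> D = {}" "A \<notin> F" "D \<notin> F"
    and meet: "\<forall>G\<in>F. G \<inter> A \<noteq> {} \<and> G \<inter> D \<noteq> {}"
    and n: "0 < n" "2 * n < m"
  shows "card F + (m - n - 1 choose (n - 1)) \<le> (m - 1 choose (n - 1))"
proof (cases "F = {}")
  case True then show ?thesis by (simp add: binomial_right_mono)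
next
  case Fne: False
  have finF: "finite F" using finite_subset[OF F(1) finite_ksub] by auto
  have n2: "n \<ge> 2"
  proof (rule ccontr)
    assume "\<not> n \<ge> 2"
    then have n1: "n = 1" using n by simp
    obtain G where G: "G \<in> F" using Fne by auto
    obtain a where a: "G = {a}" using F(1) G n1 unfolding ksub_def by (auto simp: card_1_singleton_iff)
    obtain b where b: "A = {b}" using AD(1) n1 unfolding ksub_def by (auto simp: card_1_singleton_iff)
    have "G \<inter> A \<noteq> {}" using meet G by blast
    then have "a = b" using a b by auto
    then have "G = A" using a b by simp
    then show False using G AD(4) by simp
  qed
  have gen: "card F + (m - n - 1 choose (n - 1)) \<le> (m - 1 choose (n - 1))"
    if C: "C \<in> ksub {1..m} n" "C \<notin> F" "\<forall>G\<in>F. G \<inter> C \<noteq> {}" "\<not> trivialF (insert C F)" for C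
  proof -
    have "insert C F \<subseteq> ksub {1..m} n" using C F by auto
    moreover have "cross (insert C F) (insert C F)"
      unfolding cross_def
    proof (intro ballI)
      fix a b assume a: "a \<in> insert C F" and b: "b \<in> insert C F"
      have CC: "C \<inter> C \<noteq> {}" using C(1) n unfolding ksub_def by auto
      show "a \<inter> b \<noteq> {}"
      proof (cases "a = C")
        case True
        show ?thesis
        proof (cases "b = C")
          case True then show ?thesis using \<open>a = C\<close> CC by simp
        next
          case False then have "b \<in> F" using b by simp
          then have "b \<inter> C \<noteq> {}" using C(3) by blast
          then show ?thesis using \<open>a = C\<close> by blast
        qed
      next
        case False then have aF: "a \<in> F" using a by simp
        show ?thesis
        proof (cases "b = C")
          case True then show ?thesis using C(3) aF by blast
        next
          case False then have "b \<in> F" using b by simp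
          then show ?thesis using F(2) aF unfolding cross_def by blast
        qed
      qed
    qed
    ultimately have "card (insert C F) + (m - n - 1 choose (n - 1)) \<le> (m - 1 choose (n - 1)) + 1"
      using HM[of "insert C F" m n] C(4) n2 n by simp
    then show ?thesis using C(2) finF by simp
  qed
  show ?thesis
  proof (cases "trivialF (insert A F)")
    case False then show ?thesis using gen[OF AD(1) AD(4)] meet by auto
  next
    case TA: True
    show ?thesis
    proof (cases "trivialF (insert D F)")
      case False then show ?thesis using gen[OF AD(2) AD(5)] meet by auto
    next
      case TD: True
      obtain x where x: "x \<in> A" "\<forall>G\<in>F. x \<in> G" using TA unfolding trivialF_def by auto
      obtain y where y: "y \<in> D" "\<forall>G\<in>F. y \<in> G" using TD unfolding trivialF_def by auto
      have xy: "x \<noteq> y" using x y AD(3) by auto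
      have R: "{x, y} \<subseteq> {1..m}" using x y AD(1,2) unfolding ksub_def by auto
      have cxy: "card {x, y} = 2" using xy by simp
      have "\<forall>G\<in>F. {x, y} \<subseteq> G" using x(2) y(2) by blast
      then have "card F \<le> (card {1..m} - card {x, y}) choose (n - card {x, y})"
        using count_contain[of "{1..m}" "{x, y}" F n] R F(1) by blast
      then have "card F \<le> (m - 2) choose (n - 2)" using cxy by simp
      moreover have "(m - 1 choose (n - 1)) = (m - 2 choose (n - 2)) + (m - 2 choose (n - 1))"
      proof -
        define a where "a = m - 2"
        have a: "m - 1 = Suc a" "m - 2 = a" using n n2 unfolding a_def by auto
        define b where "b = n - 2"
        have b: "n - 1 = Suc b" "n - 2 = b" using n2 unfolding b_def by auto
        show ?thesis unfolding a b by simp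
      qed
      moreover have "(m - n - 1 choose (n - 1)) \<le> (m - 2 choose (n - 1))"
        by (rule binomial_right_mono) (use n2 in auto)
      ultimately show ?thesis by linarith
    qed
  qed
qed



lemma max_disj:
  assumes "maximal_independent V kneser_adj M" "A \<in> V" "A \<notin> M" "A \<noteq> {}"
  shows "\<exists>D\<in>M. A \<inter> D = {}"
proof (rule ccontr)
  assume "\<not> (\<exists>D\<in>M. A \<inter> D = {})"
  then have nd: "\<forall>D\<in>M. A \<inter> D \<noteq> {}" by blast
  have iM: "M \<subseteq> V" "cross M M" using assms(1) unfolding maximal_independent_def indep_iff by auto
  have "independent V kneser_adj (insert A M)"
    unfolding indep_iff cross_def
  proof (intro conjI ballI)
    show "insert A M \<subseteq> V" using iM assms(2) by auto
  next
    fix u v assume u: "u \<in> insert A M" and v: "v \<in> insert A M"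
    show "u \<inter> v \<noteq> {}"
    proof (cases "u = A")
      case True
      show ?thesis
      proof (cases "v = A")
        case True then show ?thesis using \<open>u = A\<close> assms(4) by simp
      next
        case False then have "v \<in> M" using v by simp
        then show ?thesis using nd \<open>u = A\<close> by blast
      qed
    next
      case False then have uM: "u \<in> M" using u by simp
      show ?thesis
      proof (cases "v = A")
        case True then show ?thesis using nd uM by blast
      next
        case False then have "v \<in> M" using v by simp
        then show ?thesis using iM(2) uM unfolding cross_def by blast
      qed
    qed
  qed
  then have "insert A M = M" using assms(1) unfolding maximal_independent_def by blast
  then show False using assms(3) by blast
qed

lemma part1:
  fixes m n :: nat
  assumes n: "0 < n" "2 * n < m" and fr: "free_independent (kneser_vertices m n) kneser_adj F"
  shows "card F \<le> (m - 1 choose (n - 1)) - (m - n - 1 choose (n - 1))"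
proof -
  let ?V = "ksub {1..m} n"
  have iF: "F \<subseteq> ?V" "cross F F" using fr unfolding free_independent_def indep_iff kv_ksub by auto
  obtain M1 M2 where M: "M1 \<noteq> M2" "maximal_independent ?V kneser_adj M1" "maximal_independent ?V kneser_adj M2"
    "F \<subseteq> M1" "F \<subseteq> M2"
    using fr unfolding free_independent_def kv_ksub by blast
  obtain M M' A where MM: "maximal_independent ?V kneser_adj M" "maximal_independent ?V kneser_adj M'"
    "F \<subseteq> M" "F \<subseteq> M'" "A \<in> M" "A \<notin> M'"
  proof (cases "M1 \<subseteq> M2")
    case True
    then obtain A where "A \<in> M2" "A \<notin> M1" using M(1) by blast
    then show ?thesis using that[of M2 M1 A] M by blast
  next
    case False
    then obtain A where "A \<in> M1" "A \<notin> M2" by blast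
    then show ?thesis using that[of M1 M2 A] M by blast
  qed
  have iM: "M \<subseteq> ?V" "cross M M" "M' \<subseteq> ?V" "cross M' M'"
    using MM(1,2) unfolding maximal_independent_def indep_iff by auto
  have AV: "A \<in> ?V" using iM MM by auto
  have Ane: "A \<noteq> {}" using AV n unfolding ksub_def by auto
  obtain D where D: "D \<in> M'" "A \<inter> D = {}" using max_disj[OF MM(2) AV MM(6) Ane] by blast
  have DV: "D \<in> ?V" using iM D by auto
  have AF: "A \<notin> F" using MM by auto
  have DF: "D \<notin> F"
  proof
    assume "D \<in> F"
    then have "D \<in> M" using MM by auto
    then show False using iM(2) MM(5) D(2) unfolding cross_def by blast
  qed
  have meet: "\<forall>G\<in>F. G \<inter> A \<noteq> {} \<and> G \<inter> D \<noteq> {}"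
  proof
    fix G assume "G \<in> F"
    then have "G \<in> M" "G \<in> M'" using MM by auto
    then show "G \<inter> A \<noteq> {} \<and> G \<inter> D \<noteq> {}" using iM(2,4) MM(5) D(1) unfolding cross_def by blast
  qed
  have "card F + (m - n - 1 choose (n - 1)) \<le> (m - 1 choose (n - 1))"
    using core_P[OF iF AV DV D(2) AF DF meet n] .
  then show ?thesis by linarith
qed

lemma part2:
  fixes m n a b t :: nat
  assumes n: "0 < n" "2 * n < m" and ph: "phi (kneser_vertices m n) kneser_adj a b = enat t"
  shows "real t \<ge> (real (m choose n) - real a * real (m - 1 choose (n - 1)))
                     / (real (m - 1 choose (n - 1)) - real (m - n - 1 choose (n - 1)))"
proof -
  let ?V = "kneser_vertices m n"
  let ?S = "{enat t | t. phi_feasible ?V kneser_adj a b t}"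
  have "?S \<noteq> {}"
  proof
    assume "?S = {}"
    then have "phi ?V kneser_adj a b = \<infinity>" unfolding phi_def by (simp add: top_enat_def)
    then show False using ph by simp
  qed
  then obtain s where "s \<in> ?S" by blast
  then have "Inf ?S \<in> ?S" by (rule wellorder_InfI)
  then have "enat t \<in> ?S" using ph unfolding phi_def by simp
  then have feas: "phi_feasible ?V kneser_adj a b t" by auto
  then obtain P :: "nat \<Rightarrow> nat set set" and e :: "nat \<Rightarrow> nat set \<times> nat set" where
    P: "(\<Union>i\<in>{1..t}. P i) = ?V"
       "\<forall>i\<in>{1..t}. \<forall>j\<in>{1..t}. i \<noteq> j \<longrightarrow> P i \<inter> P j = {}"
       "\<forall>i\<in>{1..t}. P i \<noteq> {} \<and> independent ?V kneser_adj (P i)"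
       "\<forall>i\<in>{1..t - a}. free_independent ?V kneser_adj (P i) \<and> supports ?V kneser_adj (e i) (P i)"
    unfolding phi_feasible_def by blast
  define K where "K = m - 1 choose (n - 1)"
  define c0 where "c0 = m - n - 1 choose (n - 1)"
  define H where "H = K - c0"
  have c0K: "c0 \<le> K" unfolding K_def c0_def by (rule binomial_right_mono) auto
  have finV: "finite ?V" unfolding kv_ksub by (rule finite_ksub) simp
  have Pi: "P i \<subseteq> ?V" "cross (P i) (P i)" if "i \<in> {1..t}" for i
    using P(3) that unfolding indep_iff by auto
  have bK: "card (P i) \<le> K" if "i \<in> {1..t}" for i
    using EKR[of "P i" m n] Pi[OF that] n unfolding K_def kv_ksub by simp
  have bH: "card (P i) \<le> H" if "i \<in> {1..t - a}" for i
    using part1[OF n, of "P i"] P(4) that unfolding H_def K_def c0_def by simp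
  have cV: "card ?V = (\<Sum>i\<in>{1..t}. card (P i))"
  proof -
    have "card (\<Union>i\<in>{1..t}. P i) = (\<Sum>i\<in>{1..t}. card (P i))"
    proof (rule card_UN_disjoint)
      show "\<forall>i\<in>{1..t}. finite (P i)" using finite_subset[OF Pi(1) finV] by blast
    qed (use P(2) in auto)
    then show ?thesis using P(1) by simp
  qed
  have split: "(\<Sum>i\<in>{1..t}. card (P i)) = (\<Sum>i\<in>{1..t} - {1..t - a}. card (P i)) + (\<Sum>i\<in>{1..t - a}. card (P i))"
    by (rule sum.subset_diff) auto
  have s1: "(\<Sum>i\<in>{1..t - a}. card (P i)) \<le> card {1..t - a} * H"
    using sum_bounded_above[of "{1..t - a}" "\<lambda>i. card (P i)" H] bH by simp
  have s2: "(\<Sum>i\<in>{1..t} - {1..t - a}. card (P i)) \<le> card ({1..t} - {1..t - a}) * K"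
    using sum_bounded_above[of "{1..t} - {1..t - a}" "\<lambda>i. card (P i)" K] bK by simp
  have cd: "card ({1..t} - {1..t - a}) \<le> a" by (simp add: card_Diff_subset)
  have cd2: "card {1..t - a} \<le> t" by simp
  have "card ?V \<le> t * H + a * K"
  proof -
    have "card ?V \<le> card ({1..t} - {1..t - a}) * K + card {1..t - a} * H" using cV split s1 s2 by linarith
    also have "\<dots> \<le> a * K + t * H" using cd cd2 by (intro add_mono mult_right_mono) auto
    finally show ?thesis by simp
  qed
  moreover have "card ?V = m choose n" unfolding kv_ksub by (simp add: card_ksub)
  ultimately have nat_ineq: "m choose n \<le> t * H + a * K" by simp
  have den: "real K - real c0 = real H" unfolding H_def using c0K by (simp add: of_nat_diff)
  show ?thesis
  proof (cases "H = 0")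
    case True
    then show ?thesis unfolding K_def[symmetric] c0_def[symmetric] den by simp
  next
    case False
    then have Hp: "real H > 0" by simp
    have "real (m choose n) \<le> real t * real H + real a * real K"
      using nat_ineq by (metis of_nat_add of_nat_le_iff of_nat_mult)
    then have "real (m choose n) - real a * real K \<le> real t * real H" by linarith
    then show ?thesis unfolding K_def[symmetric] c0_def[symmetric] den using pos_divide_le_eq[OF Hp] by simp
  qed
qed

theorem mainTheorem12:
  fixes m n :: nat
  assumes "0 < n" and "2 * n < m"
  shows "(\<forall>F. free_independent (kneser_vertices m n) kneser_adj F \<longrightarrow>
            card F \<le> (m - 1 choose (n - 1)) - (m - n - 1 choose (n - 1)))
       \<and> (\<forall>a b :: nat. b \<ge> 1 \<longrightarrow> (\<forall>t::nat.
            phi (kneser_vertices m n) kneser_adj a b = enat t \<longrightarrow>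
            real t \<ge> (real (m choose n) - real a * real (m - 1 choose (n - 1)))
                     / (real (m - 1 choose (n - 1)) - real (m - n - 1 choose (n - 1)))))"
  using part1[OF assms] part2[OF assms] by blast

end
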